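(* In the setting described in the context, suppose $F$ is strongly convex with respect to $\|\cdot\|_L$ with convexity parameter $\mu>0$. Then $$H(x,T(x))-F^*\leq\gamma_\mu(F(x)-F^* )\qquad\text{for all }x\in\mathrm{dom}\,F,$$ where $\gamma_\mu=1-\frac{\mu}{4}$ if $\mu\leq2$ and $\gamma_\mu=\frac1\mu$ otherwise.
   Context: Let $U\in\mathbf{R}^{N\times N}$ be a column permutation of the $N\times N$ identity matrix, partitioned as $U=[U_1,\dots,U_n]$ with $U_i\in\mathbf{R}^{N\times N_i}$, $\sum_iN_i=N$. For $x\in\mathbf{R}^N$ write $x^{(i)}=U_i^Tx$. Each $\mathbf{R}^{N_i}$ carries the norm $\|t\|_{(i)}=\langle B_it,t\rangle^{1/2}$ and dual norm $\|t\|_{(i)}^*=\langle B_i^{-1}t,t\rangle^{1/2}$ with $B_i$ positive definite. Consider minimizing $F(x)=f(x)+\Psi(x)$ over $\mathbf{R}^N$, where $f$ is convex and differentiable with $\|\nabla_if(x+U_it)-\nabla_if(x)\|_{(i)}^*\leq L_i\|t\|_{(i)}$ for all $x,t,i$ (constants $L_i>0$, $\nabla_if(x)=U_i^T\nabla f(x)$), and $\Psi(x)=\sum_i\Psi_i(x^{(i)})$ with each $\Psi_i$ proper closed convex. The problem has a minimizer; $F^*$ is the optimal value. Let $\|x\|_L=(\sum_iL_i\|x^{(i)}\|_{(i)}^2)^{1/2}$. $F$ is strongly convex w.r.t. a norm $\|\cdot\|$ with parameter $\mu>0$ if $F(x)\geq F(y)+\langle F'(y),x-y\rangle+\frac\mu2\|x-y\|^2$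 for all $x,y\in\mathrm{dom}\,F$ and every subgradient $F'(y)$ of $F$ at $y$. Define $T^{(i)}(x)=\arg\min_{t\in\mathbf{R}^{N_i}}\{\langle\nabla_if(x),t\rangle+\frac{L_i}{2}\|t\|_{(i)}^2+\Psi_i(x^{(i)}+t)\}$, $T(x)=\sum_iU_iT^{(i)}(x)$, and $H(x,T)=f(x)+\langle\nabla f(x),T\rangle+\frac12\|T\|_L^2+\Psi(x+T)$. *)

theory Defs
  imports "HOL-Analysis.Analysis"
begin

text \<open>Coordinates of R^N are indexed by the finite type 'n; the column permutation
  U = [U_1,...,U_n] is encoded by the block map blk :: 'n => 'b (coordinate j belongs
  to block blk j). The space R^{N_i} is identified with the subspace of vectors
  supported on block i, and U_i^T x with the coordinate projection onto that block.\<close>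

definition blkspace :: "('n \<Rightarrow> 'b) \<Rightarrow> 'b \<Rightarrow> (real^'n) set" where
  "blkspace blk i = {t. \<forall>j. blk j \<noteq> i \<longrightarrow> t $ j = 0}"

definition blkproj :: "('n \<Rightarrow> 'b) \<Rightarrow> 'b \<Rightarrow> real^'n \<Rightarrow> real^'n" where
  "blkproj blk i x = (\<chi> j. if blk j = i then x $ j else 0)"

definition blk_posdef :: "('n \<Rightarrow> 'b) \<Rightarrow> 'b \<Rightarrow> real^'n^'n \<Rightarrow> bool" where
  "blk_posdef blk i M \<longleftrightarrow>
     (\<forall>j k. (blk j \<noteq> i \<or> blk k \<noteq> i) \<longrightarrow> M $ j $ k = 0) \<and>
     transpose M = M \<and>
     (\<forall>t\<in>blkspace blk i. t \<noteq> 0 \<longrightarrow> t \<bullet> (M *v t) > 0)"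

definition blknorm :: "('b \<Rightarrow> real^'n^'n) \<Rightarrow> 'b \<Rightarrow> real^'n \<Rightarrow> real" where
  "blknorm B i t = sqrt (t \<bullet> (B i *v t))"

definition blkinv :: "('n \<Rightarrow> 'b) \<Rightarrow> ('b \<Rightarrow> real^'n^'n) \<Rightarrow> 'b \<Rightarrow> real^'n \<Rightarrow> real^'n" where
  "blkinv blk B i t = (THE s. s \<in> blkspace blk i \<and> B i *v s = t)"

definition dualnorm :: "('n \<Rightarrow> 'b) \<Rightarrow> ('b \<Rightarrow> real^'n^'n) \<Rightarrow> 'b \<Rightarrow> real^'n \<Rightarrow> real" where
  "dualnorm blk B i t = sqrt (t \<bullet> blkinv blk B i t)"

definition normL :: "('n \<Rightarrow> 'b::finite) \<Rightarrow> ('b \<Rightarrow> real^'n^'n) \<Rightarrow> ('b \<Rightarrow> real) \<Rightarrow> real^'n \<Rightarrow> real" where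
  "normL blk B L x = sqrt (\<Sum>i\<in>UNIV. L i * (blknorm B i (blkproj blk i x))\<^sup>2)"

definition proper_closed_convex_on :: "(real^'n) set \<Rightarrow> (real^'n \<Rightarrow> ereal) \<Rightarrow> bool" where
  "proper_closed_convex_on V g \<longleftrightarrow>
     (\<forall>x\<in>V. g x \<noteq> -\<infinity>) \<and> (\<exists>x\<in>V. g x < \<infinity>) \<and>
     closed {(x, r::real). x \<in> V \<and> g x \<le> ereal r} \<and>
     (\<forall>x\<in>V. \<forall>y\<in>V. \<forall>u::real. 0 < u \<and> u < 1 \<longrightarrow>
        g (u *\<^sub>R x + (1 - u) *\<^sub>R y) \<le> ereal u * g x + ereal (1 - u) * g y)"

definition Psi :: "('n \<Rightarrow> 'b::finite) \<Rightarrow> ('b \<Rightarrow> real^'n \<Rightarrow> ereal) \<Rightarrow> real^'n \<Rightarrow> ereal" where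
  "Psi blk Ps x = (\<Sum>i\<in>UNIV. Ps i (blkproj blk i x))"

definition Fobj :: "(real^'n \<Rightarrow> real) \<Rightarrow> ('n \<Rightarrow> 'b::finite) \<Rightarrow> ('b \<Rightarrow> real^'n \<Rightarrow> ereal) \<Rightarrow> real^'n \<Rightarrow> ereal" where
  "Fobj f blk Ps x = ereal (f x) + Psi blk Ps x"

definition is_subgrad :: "(real^'n \<Rightarrow> ereal) \<Rightarrow> real^'n \<Rightarrow> real^'n \<Rightarrow> bool" where
  "is_subgrad F y g \<longleftrightarrow> (\<forall>z. F y + ereal (g \<bullet> (z - y)) \<le> F z)"

definition strongly_convex_wrt :: "(real^'n \<Rightarrow> real) \<Rightarrow> (real^'n \<Rightarrow> ereal) \<Rightarrow> real \<Rightarrow> bool" where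
  "strongly_convex_wrt nrm F mu \<longleftrightarrow>
     (\<forall>x y g. F x < \<infinity> \<longrightarrow> F y < \<infinity> \<longrightarrow> is_subgrad F y g \<longrightarrow>
        F y + ereal (g \<bullet> (x - y)) + ereal (mu / 2 * (nrm (x - y))\<^sup>2) \<le> F x)"

definition Tblk :: "('n \<Rightarrow> 'b) \<Rightarrow> ('b \<Rightarrow> real^'n^'n) \<Rightarrow> ('b \<Rightarrow> real) \<Rightarrow> (real^'n \<Rightarrow> real^'n)
      \<Rightarrow> ('b \<Rightarrow> real^'n \<Rightarrow> ereal) \<Rightarrow> 'b \<Rightarrow> real^'n \<Rightarrow> real^'n" where
  "Tblk blk B L gf Ps i x =
     (let obj = (\<lambda>t. ereal (blkproj blk i (gf x) \<bullet> t + L i / 2 * (blknorm B i t)\<^sup>2)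
                     + Ps i (blkproj blk i x + t))
      in SOME t. t \<in> blkspace blk i \<and> (\<forall>s\<in>blkspace blk i. obj t \<le> obj s))"

definition Tmap :: "('n \<Rightarrow> 'b::finite) \<Rightarrow> ('b \<Rightarrow> real^'n^'n) \<Rightarrow> ('b \<Rightarrow> real) \<Rightarrow> (real^'n \<Rightarrow> real^'n)
      \<Rightarrow> ('b \<Rightarrow> real^'n \<Rightarrow> ereal) \<Rightarrow> real^'n \<Rightarrow> real^'n" where
  "Tmap blk B L gf Ps x = (\<Sum>i\<in>UNIV. Tblk blk B L gf Ps i x)"

definition Hfun :: "(real^'n \<Rightarrow> real) \<Rightarrow> (real^'n \<Rightarrow> real^'n) \<Rightarrow> ('n \<Rightarrow> 'b::finite) \<Rightarrow> ('b \<Rightarrow> real^'n^'n)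
      \<Rightarrow> ('b \<Rightarrow> real) \<Rightarrow> ('b \<Rightarrow> real^'n \<Rightarrow> ereal) \<Rightarrow> real^'n \<Rightarrow> real^'n \<Rightarrow> ereal" where
  "Hfun f gf blk B L Ps x T =
     ereal (f x + gf x \<bullet> T + 1/2 * (normL blk B L T)\<^sup>2) + Psi blk Ps (x + T)"

definition gamma_mu :: "real \<Rightarrow> real" where
  "gamma_mu mu = (if mu \<le> 2 then 1 - mu / 4 else 1 / mu)"

end

theory Submission
  imports Defs
begin

lemma blkspace_subspace: "subspace (blkspace blk i)"
  unfolding subspace_def blkspace_def by auto

lemma blkspace_closed: "closed (blkspace blk i)"
  by (rule closed_subspace[OF blkspace_subspace])

lemma blkproj_in: "blkproj blk i x \<in> blkspace blk i"
  unfolding blkproj_def blkspace_def by auto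

lemma blkproj_add: "blkproj blk i (x + y) = blkproj blk i x + blkproj blk i y"
  unfolding blkproj_def by (vector)

lemma blkproj_scale: "blkproj blk i (c *\<^sub>R x) = c *\<^sub>R blkproj blk i x"
  unfolding blkproj_def by (vector)

lemma blkproj_diff: "blkproj blk i (x - y) = blkproj blk i x - blkproj blk i y"
  unfolding blkproj_def by (vector)

lemma blkproj_id: "t \<in> blkspace blk i \<Longrightarrow> blkproj blk i t = t"
  unfolding blkproj_def blkspace_def by (vector)

lemma blkproj_other: "t \<in> blkspace blk i \<Longrightarrow> j \<noteq> i \<Longrightarrow> blkproj blk j t = 0"
  unfolding blkproj_def blkspace_def by (vector)

lemma sum_blkproj: "(\<Sum>i\<in>(UNIV::'b::finite set). blkproj blk i (x::real^'n)) = x"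
proof -
  have "(\<Sum>i\<in>(UNIV::'b set). blkproj blk i x) $ j = x $ j" for j
    unfolding sum_component blkproj_def using sum.delta'[of "UNIV" "blk j" "\<lambda>_. x $ j"] by simp
  then show ?thesis by (simp add: vec_eq_iff)
qed

lemma blkproj_sum:
  assumes "\<And>i. t i \<in> blkspace blk i"
  shows "blkproj blk j (\<Sum>i\<in>(UNIV::'b::finite set). t i) = t j"
proof -
  have "blkproj blk j (\<Sum>i\<in>(UNIV::'b set). t i) $ k = t j $ k" for k
  proof (cases "blk k = j")
    case True
    have "(\<Sum>i\<in>UNIV. t i $ k) = (\<Sum>i\<in>UNIV. if i = j then t j $ k else 0)"
      using assms True by (intro sum.cong) (auto simp: blkspace_def)
    then have "(\<Sum>i\<in>UNIV. t i $ k) = t j $ k" by simp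
    then show ?thesis using True unfolding blkproj_def sum_component by simp
  next
    case False
    then show ?thesis using assms[of j] unfolding blkproj_def blkspace_def by auto
  qed
  then show ?thesis by (simp add: vec_eq_iff)
qed

lemma inner_blk: "(a::real^'n) \<bullet> t = (\<Sum>i\<in>(UNIV::'b::finite set). blkproj blk i a \<bullet> blkproj blk i t)"
proof -
  have "(\<Sum>i\<in>(UNIV::'b set). blkproj blk i a \<bullet> blkproj blk i t)
      = (\<Sum>i\<in>(UNIV::'b set). \<Sum>j\<in>UNIV. if blk j = i then a $ j * t $ j else 0)"
    unfolding inner_vec_def blkproj_def by (auto intro!: sum.cong)
  also have "\<dots> = (\<Sum>j\<in>UNIV. \<Sum>i\<in>(UNIV::'b set). if blk j = i then a $ j * t $ j else 0)"
    by (rule sum.swap)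
  also have "\<dots> = a \<bullet> t" unfolding inner_vec_def by simp
  finally show ?thesis by simp
qed

lemma qf_scale: "(c *\<^sub>R (t::real^'n)) \<bullet> (M *v (c *\<^sub>R t)) = c\<^sup>2 * (t \<bullet> (M *v t))"
  by (simp only: matrix_vector_mult_scaleR inner_scaleR_left inner_scaleR_right power2_eq_square mult.assoc)

lemma qf_nonneg: "blk_posdef blk i M \<Longrightarrow> t \<in> blkspace blk i \<Longrightarrow> 0 \<le> t \<bullet> (M *v t)"
  unfolding blk_posdef_def by (cases "t = 0") (auto intro: less_imp_le)

lemma blknorm_sq: "blk_posdef blk i (B i) \<Longrightarrow> t \<in> blkspace blk i \<Longrightarrow> (blknorm B i t)\<^sup>2 = t \<bullet> (B i *v t)"
  unfolding blknorm_def using qf_nonneg by simp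

lemma normL_sq:
  assumes "\<And>i. L i > 0"
  shows "(normL blk B L x)\<^sup>2 = (\<Sum>i\<in>UNIV. L i * (blknorm B i (blkproj blk i x))\<^sup>2)"
proof -
  have "0 \<le> (\<Sum>i\<in>UNIV. L i * (blknorm B i (blkproj blk i x))\<^sup>2)"
    using assms by (intro sum_nonneg) (simp add: less_imp_le)
  then show ?thesis unfolding normL_def by simp
qed

lemma normL_scale:
  assumes "\<And>i. L i > 0" "\<And>i. blk_posdef blk i (B i)"
  shows "(normL blk B L (c *\<^sub>R x))\<^sup>2 = c\<^sup>2 * (normL blk B L x)\<^sup>2"
proof -
  have "(blknorm B i (blkproj blk i (c *\<^sub>R x)))\<^sup>2 = c\<^sup>2 * (blknorm B i (blkproj blk i x))\<^sup>2" for i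
    using assms(2) blknorm_sq[of blk i B] blkproj_in[of blk i] blkspace_subspace[of blk i]
    by (simp only: blkproj_scale qf_scale subspace_scale)
  then show ?thesis unfolding normL_sq[OF assms(1)]
    by (simp add: sum_distrib_left algebra_simps)
qed

lemma posdef_coercive:
  assumes "blk_posdef blk i M"
  shows "\<exists>c>0. \<forall>t\<in>blkspace blk i. c * (norm t)\<^sup>2 \<le> t \<bullet> (M *v t)"
proof -
  let ?S = "blkspace blk i \<inter> sphere 0 1"
  have cS: "compact ?S"
    by (intro closed_Int_compact blkspace_closed compact_sphere)
  show ?thesis
  proof (cases "?S = {}")
    case True
    have "t = 0" if "t \<in> blkspace blk i" for t
    proof (rule ccontr)
      assume "t \<noteq> 0"
      then have "(1 / norm t) *\<^sub>R t \<in> ?S"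
        using that blkspace_subspace[of blk i] by (auto simp: subspace_scale)
      then show False using True by blast
    qed
    show ?thesis
    proof (intro exI[of _ 1] conjI ballI)
      fix t assume "t \<in> blkspace blk i"
      then have "t = 0" by fact
      then show "1 * (norm t)\<^sup>2 \<le> t \<bullet> (M *v t)" by simp
    qed simp
  next
    case False
    have "continuous_on ?S (\<lambda>t. t \<bullet> (M *v t))"
      by (intro continuous_intros matrix_vector_mult_linear_continuous_on[unfolded eta_contract_eq])
    then obtain u where u: "u \<in> ?S" "\<And>y. y \<in> ?S \<Longrightarrow> u \<bullet> (M *v u) \<le> y \<bullet> (M *v y)"
      using continuous_attains_inf[OF cS False] by blast
    have cpos: "u \<bullet> (M *v u) > 0"
      using u(1) assms unfolding blk_posdef_def by auto
    show ?thesis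
    proof (intro exI[of _ "u \<bullet> (M *v u)"] conjI cpos ballI)
      fix t assume t: "t \<in> blkspace blk i"
      show "u \<bullet> (M *v u) * (norm t)\<^sup>2 \<le> t \<bullet> (M *v t)"
      proof (cases "t = 0")
        case True then show ?thesis by simp
      next
        case False
        let ?v = "(1 / norm t) *\<^sub>R t"
        have v: "?v \<in> ?S"
          using t False blkspace_subspace[of blk i] by (auto simp: subspace_scale)
        have "t = norm t *\<^sub>R ?v" using False by simp
        then have e: "t \<bullet> (M *v t) = (norm t)\<^sup>2 * (?v \<bullet> (M *v ?v))"
          by (metis qf_scale)
        have "u \<bullet> (M *v u) * (norm t)\<^sup>2 \<le> (?v \<bullet> (M *v ?v)) * (norm t)\<^sup>2"
          by (rule mult_right_mono[OF u(2)[OF v] zero_le_power2])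
        then show ?thesis by (simp only: e mult.commute)
      qed
    qed
  qed
qed

lemma pcc_lower:
  fixes g :: "real^'n \<Rightarrow> ereal"
  assumes pcc: "proper_closed_convex_on V g" and sV: "subspace V" and cV: "closed V"
  shows "\<exists>m b. \<forall>y\<in>V. ereal (m - b * norm y) \<le> g y"
proof -
  from pcc have ninf: "\<And>y. y \<in> V \<Longrightarrow> g y \<noteq> -\<infinity>"
    and ex: "\<exists>y\<in>V. g y < \<infinity>"
    and cl: "closed {(x, r::real). x \<in> V \<and> g x \<le> ereal r}"
    and cvx: "\<And>x y u. x \<in> V \<Longrightarrow> y \<in> V \<Longrightarrow> 0 < u \<Longrightarrow> u < 1 \<Longrightarrow>
        g (u *\<^sub>R x + (1 - u) *\<^sub>R y) \<le> ereal u * g x + ereal (1 - u) * g y"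
    unfolding proper_closed_convex_on_def by blast+
  from ex obtain y0 where y0: "y0 \<in> V" "g y0 < \<infinity>" by blast
  define P0 where "P0 = real_of_ereal (g y0)"
  have gy0: "g y0 = ereal P0" using y0 ninf[OF y0(1)] unfolding P0_def by (cases "g y0") auto
  let ?K = "V \<inter> cball y0 1"
  have cK: "compact ?K" by (intro closed_Int_compact cV compact_cball)
  have "\<exists>n::nat. \<forall>y\<in>?K. ereal (- real n) < g y"
  proof (rule ccontr)
    assume neg: "\<not> ?thesis"
    have h: "\<exists>y\<in>?K. g y \<le> ereal (- real n)" for n :: nat
    proof (rule ccontr)
      assume "\<not> (\<exists>y\<in>?K. g y \<le> ereal (- real n))"
      then have "\<forall>y\<in>?K. ereal (- real n) < g y" by (simp add: not_le)
      then show False using neg by blast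
    qed
    have "\<exists>ys. \<forall>n. ys n \<in> ?K \<and> g (ys n) \<le> ereal (- real n)"
      by (rule choice) (use h in blast)
    then obtain ys where ys0: "\<forall>n. ys n \<in> ?K \<and> g (ys n) \<le> ereal (- real n)" by blast
    then have ys: "\<And>n. ys n \<in> ?K" "\<And>n. g (ys n) \<le> ereal (- real n)" by auto
    have "\<exists>l\<in>?K. \<exists>r. strict_mono r \<and> (ys \<circ> r) \<longlonglongrightarrow> l"
      using compact_imp_seq_compact[OF cK] ys(1) unfolding seq_compact_def by blast
    then obtain l r where lr: "l \<in> ?K" "strict_mono r" "(ys \<circ> r) \<longlonglongrightarrow> l"
      by blast
    have "g l \<le> ereal \<rho>" for \<rho>
    proof -
      obtain N :: nat where N: "- \<rho> \<le> real N" using real_arch_simple by blast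
      have ev: "\<forall>\<^sub>F n in sequentially. ((ys \<circ> r) n, \<rho>) \<in> {(x, r::real). x \<in> V \<and> g x \<le> ereal r}"
        unfolding eventually_sequentially
      proof (intro exI[of _ N] allI impI)
        fix n assume "N \<le> n"
        then have "real N \<le> real (r n)" using seq_suble[OF lr(2), of n] by simp
        then have "ereal (- real (r n)) \<le> ereal \<rho>" using N by simp
        from order_trans[OF ys(2)[of "r n"] this] have "g (ys (r n)) \<le> ereal \<rho>" .
        then show "((ys \<circ> r) n, \<rho>) \<in> {(x, r::real). x \<in> V \<and> g x \<le> ereal r}"
          using ys(1)[of "r n"] by auto
      qed
      have "(l, \<rho>) \<in> {(x, r::real). x \<in> V \<and> g x \<le> ereal r}"
      proof (rule Lim_in_closed_set[OF cl ev])
        show "(\<lambda>n. ((ys \<circ> r) n, \<rho>)) \<longlonglongrightarrow> (l, \<rho>)"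
          by (rule tendsto_Pair[OF lr(3) tendsto_const])
      qed simp
      then show ?thesis by auto
    qed
    then have "g l = -\<infinity>"
    proof (cases "g l")
      case (real a) then show ?thesis using \<open>\<And>\<rho>. g l \<le> ereal \<rho>\<close>[of "a - 1"] by simp
    next
      case PInf then show ?thesis using \<open>\<And>\<rho>. g l \<le> ereal \<rho>\<close>[of 0] by simp
    qed simp
    then show False using ninf lr(1) by auto
  qed
  then obtain n :: nat where n: "\<And>y. y \<in> ?K \<Longrightarrow> ereal (- real n) < g y" by blast
  define m where "m = - real n"
  have mK: "\<And>y. y \<in> ?K \<Longrightarrow> ereal m < g y" using n unfolding m_def by blast
  have mP: "m < P0" using mK[of y0] y0 gy0 by simp
  have bnd: "ereal (m - (P0 - m) * norm (y - y0)) \<le> g y" if y: "y \<in> V" for y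
  proof (cases "norm (y - y0) \<le> 1")
    case True
    then have "y \<in> ?K" using y by (simp add: dist_norm norm_minus_commute)
    then have "ereal m < g y" by (rule mK)
    moreover have "m - (P0 - m) * norm (y - y0) \<le> m" using mP by (simp add: mult_nonneg_nonneg)
    then have "ereal (m - (P0 - m) * norm (y - y0)) \<le> ereal m" by simp
    ultimately show ?thesis using order_trans less_imp_le by blast
  next
    case False
    define d where "d = norm (y - y0)"
    have d1: "d > 1" using False d_def by simp
    show ?thesis
    proof (cases "g y")
      case PInf then show ?thesis by simp
    next
      case MInf then show ?thesis using ninf[OF y] by simp
    next
      case (real Y)
      define s where "s = 1 / d"
      have s: "0 < s" "s < 1" using d1 unfolding s_def by auto
      define z where "z = s *\<^sub>R y + (1 - s) *\<^sub>R y0"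
      have zV: "z \<in> V" unfolding z_def
        using sV y y0(1) by (intro subspace_add subspace_scale) auto
      have "y0 - z = s *\<^sub>R (y0 - y)" unfolding z_def by (simp add: algebra_simps)
      then have "norm (y0 - z) = s * d"
        using s by (simp add: d_def norm_minus_commute)
      also have "\<dots> = 1" using d1 unfolding s_def by simp
      finally have "z \<in> ?K" using zV by (simp add: dist_norm)
      then have "ereal m < g z" by (rule mK)
      also have "g z \<le> ereal s * g y + ereal (1 - s) * g y0"
        unfolding z_def by (rule cvx[OF y y0(1) s])
      also have "\<dots> = ereal (s * Y + (1 - s) * P0)" using real gy0 by simp
      finally have "m < s * Y + (1 - s) * P0" by simp
      then have "m * d < Y + (d - 1) * P0" using d1 unfolding s_def by (simp add: field_simps)
      then have "m - (P0 - m) * d \<le> Y" using d1 mP by (simp add: algebra_simps)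
      then show ?thesis using real d_def by simp
    qed
  qed
  have "\<forall>y\<in>V. ereal (m - (P0 - m) * norm y0 - (P0 - m) * norm y) \<le> g y"
  proof
    fix y assume y: "y \<in> V"
    have "norm (y - y0) \<le> norm y + norm y0" by (rule norm_triangle_ineq4)
    then have "(P0 - m) * norm (y - y0) \<le> (P0 - m) * (norm y + norm y0)"
      using mP by (intro mult_left_mono) simp_all
    then have "m - (P0 - m) * norm y0 - (P0 - m) * norm y \<le> m - (P0 - m) * norm (y - y0)"
      by (simp add: algebra_simps)
    then show "ereal (m - (P0 - m) * norm y0 - (P0 - m) * norm y) \<le> g y"
      using bnd[OF y] order_trans ereal_less_eq(3) by blast
  qed
  then show ?thesis by blast
qed

lemma coercive_bound:
  fixes c b d R x :: real
  assumes c: "c > 0" and x: "x \<ge> 0" and h: "c * x\<^sup>2 - b * x - d \<le> R"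
  shows "x \<le> (\<bar>b\<bar> + \<bar>d\<bar> + \<bar>R\<bar>) / c + 1"
proof (rule ccontr)
  let ?K = "(\<bar>b\<bar> + \<bar>d\<bar> + \<bar>R\<bar>) / c + 1"
  assume "\<not> x \<le> ?K"
  then have xK: "x > ?K" by simp
  have K1: "?K \<ge> 1" using c by (simp add: divide_nonneg_pos)
  have "(\<bar>b\<bar> + \<bar>d\<bar> + \<bar>R\<bar>) / c < x" using xK by linarith
  then have "\<bar>b\<bar> + \<bar>d\<bar> + \<bar>R\<bar> < x * c" using pos_divide_less_eq[OF c] by blast
  then have cx: "c * x > \<bar>b\<bar> + \<bar>d\<bar> + \<bar>R\<bar>" by (simp only: mult.commute)
  have x1: "x > 1" using xK K1 by simp
  have c1: "c * x\<^sup>2 = (c * x) * x" by (simp add: power2_eq_square)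
  have c2: "(c * x) * x > (\<bar>b\<bar> + \<bar>d\<bar> + \<bar>R\<bar>) * x" using cx x1 by (simp add: mult_strict_right_mono)
  have c3: "\<bar>b\<bar> * x + \<bar>d\<bar> + \<bar>R\<bar> \<le> (\<bar>b\<bar> + \<bar>d\<bar> + \<bar>R\<bar>) * x"
  proof -
    have "\<bar>d\<bar> * 1 \<le> \<bar>d\<bar> * x" by (rule mult_left_mono) (use x1 in auto)
    moreover have "\<bar>R\<bar> * 1 \<le> \<bar>R\<bar> * x" by (rule mult_left_mono) (use x1 in auto)
    ultimately show ?thesis by (simp add: distrib_right)
  qed
  have "c * x\<^sup>2 > \<bar>b\<bar> * x + \<bar>d\<bar> + \<bar>R\<bar>" using c1 c2 c3 by linarith
  moreover have "b * x \<le> \<bar>b\<bar> * x" using x by (simp add: mult_right_mono)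
  ultimately show False using h by linarith
qed

lemma argmin_exists:
  fixes \<phi> :: "real^'n \<Rightarrow> ereal"
  assumes cl: "closed {(t, r::real). t \<in> V \<and> \<phi> t \<le> ereal r}"
    and lb: "\<And>t. t \<in> V \<Longrightarrow> ereal (c * (norm t)\<^sup>2 - b * norm t - d) \<le> \<phi> t"
    and c: "c > 0"
    and t0: "t0 \<in> V" "\<phi> t0 < \<infinity>"
  shows "\<exists>t\<in>V. \<forall>s\<in>V. \<phi> t \<le> \<phi> s"
proof -
  define R where "R = real_of_ereal (\<phi> t0)"
  have R: "\<phi> t0 = ereal R" using t0 lb[OF t0(1)] unfolding R_def by (cases "\<phi> t0") auto
  define E where "E = {(t, r::real). t \<in> V \<and> \<phi> t \<le> ereal r} \<inter> {p. snd p \<le> R}"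
  have cE: "closed E" unfolding E_def
    by (intro closed_Int cl closed_Collect_le continuous_on_snd continuous_on_id continuous_on_const)
  define K where "K = (\<bar>b\<bar> + \<bar>d\<bar> + \<bar>R\<bar>) / c + 1"
  have bE: "bounded E" unfolding bounded_iff
  proof (intro exI[of _ "K + \<bar>R\<bar> + \<bar>b\<bar> * K + \<bar>d\<bar>"] ballI)
    fix p assume "p \<in> E"
    then obtain t r where p: "p = (t, r)" "t \<in> V" "\<phi> t \<le> ereal r" "r \<le> R"
      unfolding E_def by auto
    have "ereal (c * (norm t)\<^sup>2 - b * norm t - d) \<le> ereal r" using lb[OF p(2)] p(3) by (rule order_trans)
    then have h: "c * (norm t)\<^sup>2 - b * norm t - d \<le> r" by simp
    then have nt: "norm t \<le> K" unfolding K_def using p(4) c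
      by (intro coercive_bound) auto
    have "0 \<le> c * (norm t)\<^sup>2" using c by simp
    moreover have "b * norm t \<le> \<bar>b\<bar> * K"
    proof -
      have "b * norm t \<le> \<bar>b\<bar> * norm t" by (rule mult_right_mono) simp_all
      also have "\<dots> \<le> \<bar>b\<bar> * K" by (rule mult_left_mono[OF nt]) simp
      finally show ?thesis .
    qed
    ultimately have "- \<bar>b\<bar> * K - \<bar>d\<bar> \<le> r" using h by linarith
    moreover have "0 \<le> \<bar>b\<bar> * K" unfolding K_def using c by (simp add: divide_nonneg_pos)
    ultimately have "\<bar>r\<bar> \<le> \<bar>R\<bar> + \<bar>b\<bar> * K + \<bar>d\<bar>" using p(4) by linarith
    moreover have "norm p \<le> norm t + norm r" unfolding p(1) by (rule norm_Pair_le)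
    ultimately show "norm p \<le> K + \<bar>R\<bar> + \<bar>b\<bar> * K + \<bar>d\<bar>" using nt by simp
  qed
  have cpE: "compact E" using cE bE by (simp add: compact_eq_bounded_closed)
  have t0E: "(t0, R) \<in> E" unfolding E_def using t0 R by simp
  have csE: "compact (snd ` E)" by (rule compact_continuous_image[OF _ cpE]) (intro continuous_intros)
  have neE: "snd ` E \<noteq> {}" using t0E by blast
  obtain rs where rs: "rs \<in> snd ` E" "\<And>r. r \<in> snd ` E \<Longrightarrow> rs \<le> r"
    using compact_attains_inf[OF csE neE] by blast
  then obtain ts where tsE: "(ts, rs) \<in> E" by auto
  then have ts: "ts \<in> V" "\<phi> ts \<le> ereal rs" "rs \<le> R" unfolding E_def by auto
  show ?thesis
  proof (intro bexI[OF _ ts(1)] ballI)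
    fix s assume s: "s \<in> V"
    show "\<phi> ts \<le> \<phi> s"
    proof (cases "\<phi> s \<le> ereal R")
      case True
      then obtain S where S: "\<phi> s = ereal S"
        using lb[OF s] by (cases "\<phi> s") auto
      then have "(s, S) \<in> E" unfolding E_def using s True by simp
      then have "rs \<le> S" using rs(2) by force
      then show ?thesis using ts(2) S by (simp add: order_trans)
    next
      case False
      then have "ereal R < \<phi> s" by simp
      moreover have "\<phi> ts \<le> ereal R" using ts(2,3) by (simp add: order_trans)
      ultimately show ?thesis by simp
    qed
  qed
qed

lemma Tblk_min:
  fixes x :: "real^'n" and gf :: "real^'n \<Rightarrow> real^'n"
  assumes Bpd: "blk_posdef blk i (B i)" and Lp: "L i > 0"
    and pcc: "proper_closed_convex_on (blkspace blk i) (Ps i)"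
  defines "obj \<equiv> (\<lambda>t. ereal (blkproj blk i (gf x) \<bullet> t + L i / 2 * (blknorm B i t)\<^sup>2)
                     + Ps i (blkproj blk i x + t))"
  shows "Tblk blk B L gf Ps i x \<in> blkspace blk i \<and>
         (\<forall>s\<in>blkspace blk i. obj (Tblk blk B L gf Ps i x) \<le> obj s)"
proof -
  let ?V = "blkspace blk i"
  define a where "a = blkproj blk i (gf x)"
  define x0 where "x0 = blkproj blk i x"
  define q where "q = (\<lambda>t. a \<bullet> t + L i / 2 * (blknorm B i t)\<^sup>2)"
  have obj_eq: "obj = (\<lambda>t. ereal (q t) + Ps i (x0 + t))"
    unfolding obj_def q_def a_def x0_def by simp
  have sV: "subspace ?V" by (rule blkspace_subspace)
  have x0V: "x0 \<in> ?V" unfolding x0_def by (rule blkproj_in)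
  have memV: "x0 + t \<in> ?V \<longleftrightarrow> t \<in> ?V" for t
  proof
    assume "x0 + t \<in> ?V"
    from subspace_diff[OF sV this x0V] have "(x0 + t) - x0 \<in> ?V" .
    then show "t \<in> ?V" by simp
  qed (use sV x0V in \<open>rule subspace_add\<close>)
  from pcc have ninf: "\<And>y. y \<in> ?V \<Longrightarrow> Ps i y \<noteq> -\<infinity>"
    and ex: "\<exists>y\<in>?V. Ps i y < \<infinity>"
    and cl: "closed {(y, r::real). y \<in> ?V \<and> Ps i y \<le> ereal r}"
    unfolding proper_closed_convex_on_def by blast+
  have qcont: "continuous_on UNIV q"
    unfolding q_def blknorm_def
    by (intro continuous_intros matrix_vector_mult_linear_continuous_on[unfolded eta_contract_eq])
  have "{(t, r::real). t \<in> ?V \<and> obj t \<le> ereal r}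
      = (\<lambda>p. (x0 + fst p, snd p - q (fst p))) -` {(y, r::real). y \<in> ?V \<and> Ps i y \<le> ereal r}"
  proof (intro set_eqI)
    fix p :: "(real^'n) \<times> real"
    obtain t r where p: "p = (t, r)" by (cases p)
    have oe: "obj t \<le> ereal r \<longleftrightarrow> Ps i (x0 + t) \<le> ereal (r - q t)"
      unfolding obj_eq by (cases "Ps i (x0 + t)") (simp_all add: algebra_simps)
    then show "p \<in> {(t, r::real). t \<in> ?V \<and> obj t \<le> ereal r} \<longleftrightarrow>
        p \<in> (\<lambda>p. (x0 + fst p, snd p - q (fst p))) -` {(y, r::real). y \<in> ?V \<and> Ps i y \<le> ereal r}"
      unfolding p using memV[of t] oe by simp
  qed
  also have "closed \<dots>"
  proof (rule closed_vimage[OF cl])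
    have qf: "continuous_on UNIV (\<lambda>p::(real^'n) \<times> real. q (fst p))"
      by (rule continuous_on_compose2[OF qcont continuous_on_fst[OF continuous_on_id]]) auto
    show "continuous_on UNIV (\<lambda>p::(real^'n) \<times> real. (x0 + fst p, snd p - q (fst p)))"
      by (intro continuous_on_Pair continuous_on_add continuous_on_diff continuous_on_const
          continuous_on_fst continuous_on_snd continuous_on_id qf)
  qed
  finally have clobj: "closed {(t, r::real). t \<in> ?V \<and> obj t \<le> ereal r}" .
  obtain c0 where c0: "c0 > 0" "\<And>t. t \<in> ?V \<Longrightarrow> c0 * (norm t)\<^sup>2 \<le> t \<bullet> (B i *v t)"
    using posdef_coercive[OF Bpd] by blast
  obtain m b where mb: "\<And>y. y \<in> ?V \<Longrightarrow> ereal (m - b * norm y) \<le> Ps i y"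
    using pcc_lower[OF pcc sV blkspace_closed] by blast
  have lb: "ereal (L i / 2 * c0 * (norm t)\<^sup>2 - (norm a + \<bar>b\<bar>) * norm t - (\<bar>b\<bar> * norm x0 - m)) \<le> obj t"
    if t: "t \<in> ?V" for t
  proof -
    have "- (norm a * norm t) \<le> a \<bullet> t" using Cauchy_Schwarz_ineq2[of a t] by linarith
    moreover have "L i / 2 * (c0 * (norm t)\<^sup>2) \<le> L i / 2 * (blknorm B i t)\<^sup>2"
      using c0(2)[OF t] blknorm_sq[of blk i B t, OF Bpd t] Lp by (rule_tac mult_left_mono) simp_all
    ultimately have qlb: "L i / 2 * c0 * (norm t)\<^sup>2 - norm a * norm t \<le> q t"
      unfolding q_def by (simp add: mult.assoc)
    have "b * norm (x0 + t) \<le> \<bar>b\<bar> * norm (x0 + t)" by (simp add: mult_right_mono)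
    also have "\<dots> \<le> \<bar>b\<bar> * (norm x0 + norm t)" by (rule mult_left_mono[OF norm_triangle_ineq]) simp
    finally have "m - \<bar>b\<bar> * (norm x0 + norm t) \<le> m - b * norm (x0 + t)" by simp
    then have e1: "ereal (m - \<bar>b\<bar> * (norm x0 + norm t)) \<le> ereal (m - b * norm (x0 + t))" by simp
    have "x0 + t \<in> ?V" using memV[of t] t by simp
    then have "ereal (m - b * norm (x0 + t)) \<le> Ps i (x0 + t)" by (rule mb)
    with e1 have "ereal (m - \<bar>b\<bar> * (norm x0 + norm t)) \<le> Ps i (x0 + t)" by (rule order_trans)
    then have am: "ereal (L i / 2 * c0 * (norm t)\<^sup>2 - norm a * norm t) + ereal (m - \<bar>b\<bar> * (norm x0 + norm t))
        \<le> ereal (q t) + Ps i (x0 + t)"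
      using qlb by (intro add_mono) simp_all
    have "(L i / 2 * c0 * (norm t)\<^sup>2 - norm a * norm t) + (m - \<bar>b\<bar> * (norm x0 + norm t))
        = L i / 2 * c0 * (norm t)\<^sup>2 - (norm a + \<bar>b\<bar>) * norm t - (\<bar>b\<bar> * norm x0 - m)"
      by (simp add: algebra_simps)
    then have eqe: "ereal (L i / 2 * c0 * (norm t)\<^sup>2 - norm a * norm t) + ereal (m - \<bar>b\<bar> * (norm x0 + norm t))
        = ereal (L i / 2 * c0 * (norm t)\<^sup>2 - (norm a + \<bar>b\<bar>) * norm t - (\<bar>b\<bar> * norm x0 - m))"
      by (simp only: plus_ereal.simps(1))
    show ?thesis unfolding obj_eq eqe[symmetric] by (rule am)
  qed
  from ex obtain y1 where y1: "y1 \<in> ?V" "Ps i y1 < \<infinity>" by blast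
  have t0V: "y1 - x0 \<in> ?V" by (rule subspace_diff[OF sV y1(1) x0V])
  have t0f: "obj (y1 - x0) < \<infinity>" unfolding obj_eq using y1(2) by simp
  have cpos: "L i / 2 * c0 > 0" using Lp c0(1) by simp
  have "\<exists>t\<in>?V. \<forall>s\<in>?V. obj t \<le> obj s"
    by (rule argmin_exists[OF clobj lb cpos t0V t0f])
  then have "\<exists>t. t \<in> ?V \<and> (\<forall>s\<in>?V. obj t \<le> obj s)" by blast
  from someI_ex[OF this] show ?thesis
    unfolding Tblk_def Let_def obj_def .
qed

lemma convex_tangent:
  fixes f :: "real^'n \<Rightarrow> real"
  assumes cf: "convex_on UNIV f" and df: "\<And>y. (f has_derivative (\<lambda>h. gf y \<bullet> h)) (at y)"
  shows "f x + gf x \<bullet> T \<le> f (x + T)"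
proof -
  define g where "g = (\<lambda>s::real. f (x + s *\<^sub>R T))"
  have cg: "convex_on UNIV g"
    unfolding convex_on_def
  proof (intro conjI ballI allI impI convex_UNIV)
    fix a b u v :: real assume uv: "0 \<le> u" "0 \<le> v" "u + v = 1"
    have e: "u *\<^sub>R x + v *\<^sub>R x = x" by (metis scaleR_add_left scaleR_one uv(3))
    have "x + (u *\<^sub>R a + v *\<^sub>R b) *\<^sub>R T = (u *\<^sub>R x + v *\<^sub>R x) + (u *\<^sub>R a + v *\<^sub>R b) *\<^sub>R T"
      by (simp only: e)
    also have "\<dots> = u *\<^sub>R (x + a *\<^sub>R T) + v *\<^sub>R (x + b *\<^sub>R T)"
      by (simp add: algebra_simps)
    finally have "x + (u *\<^sub>R a + v *\<^sub>R b) *\<^sub>R T = u *\<^sub>R (x + a *\<^sub>R T) + v *\<^sub>R (x + b *\<^sub>R T)" .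
    then show "g (u *\<^sub>R a + v *\<^sub>R b) \<le> u * g a + v * g b"
      unfolding g_def using cf uv unfolding convex_on_def by auto
  qed
  have d1: "((\<lambda>s::real. x + s *\<^sub>R T) has_derivative (\<lambda>h. h *\<^sub>R T)) (at 0 within UNIV)"
    by (auto intro!: derivative_eq_intros)
  have "((\<lambda>s. f (x + s *\<^sub>R T)) has_derivative (\<lambda>h. gf (x + 0 *\<^sub>R T) \<bullet> (h *\<^sub>R T))) (at 0 within UNIV)"
    by (rule has_derivative_compose[OF d1 df])
  moreover have "(\<lambda>h. gf (x + 0 *\<^sub>R T) \<bullet> (h *\<^sub>R T)) = (*) (gf x \<bullet> T)"
    by (simp add: fun_eq_iff)
  ultimately have "(g has_derivative (*) (gf x \<bullet> T)) (at 0 within UNIV)"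
    unfolding g_def by simp
  then have "(g has_field_derivative (gf x \<bullet> T)) (at 0 within UNIV)"
    by (simp add: has_field_derivative_def)
  then have "g 1 - g 0 \<ge> (gf x \<bullet> T) * (1 - 0)"
    by (intro convex_on_imp_above_tangent[OF cg]) auto
  then show ?thesis unfolding g_def by simp
qed

lemma F_finite:
  assumes Fy: "Fobj f blk Ps y < \<infinity>"
    and pcc: "\<And>i. proper_closed_convex_on (blkspace blk i) (Ps i)"
  shows "\<And>i. Ps i (blkproj blk i y) = ereal (real_of_ereal (Ps i (blkproj blk i y)))"
    and "Fobj f blk Ps y = ereal (f y + (\<Sum>i\<in>UNIV. real_of_ereal (Ps i (blkproj blk i y))))"
proof -
  have ninf: "Ps i (blkproj blk i y) \<noteq> -\<infinity>" for i
    using pcc[of i] blkproj_in[of blk i y] unfolding proper_closed_convex_on_def by blast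
  have "Psi blk Ps y \<noteq> \<infinity>" using Fy unfolding Fobj_def by auto
  then have pinf: "Ps i (blkproj blk i y) \<noteq> \<infinity>" for i
    unfolding Psi_def using sum_Pinfty by fastforce
  show fin: "Ps i (blkproj blk i y) = ereal (real_of_ereal (Ps i (blkproj blk i y)))" for i
    using ninf[of i] pinf[of i] by (cases "Ps i (blkproj blk i y)") auto
  have "Psi blk Ps y = (\<Sum>i\<in>UNIV. ereal (real_of_ereal (Ps i (blkproj blk i y))))"
    unfolding Psi_def by (rule sum.cong[OF refl fin])
  then show "Fobj f blk Ps y = ereal (f y + (\<Sum>i\<in>UNIV. real_of_ereal (Ps i (blkproj blk i y))))"
    unfolding Fobj_def by (simp add: sum_ereal)
qed

lemma H_decomp:
  assumes Lp: "\<And>i. L i > 0"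
  shows "Hfun f gf blk B L Ps x T = ereal (f x) + (\<Sum>i\<in>UNIV.
      ereal (blkproj blk i (gf x) \<bullet> blkproj blk i T + L i / 2 * (blknorm B i (blkproj blk i T))\<^sup>2)
      + Ps i (blkproj blk i x + blkproj blk i T))"
proof -
  define al where "al = (\<lambda>i. blkproj blk i (gf x) \<bullet> blkproj blk i T + L i / 2 * (blknorm B i (blkproj blk i T))\<^sup>2)"
  define P where "P = (\<lambda>i. Ps i (blkproj blk i x + blkproj blk i T))"
  have e1a: "gf x \<bullet> T = (\<Sum>i\<in>UNIV. blkproj blk i (gf x) \<bullet> blkproj blk i T)" by (rule inner_blk)
  have e1b: "1/2 * (normL blk B L T)\<^sup>2 = (\<Sum>i\<in>UNIV. L i / 2 * (blknorm B i (blkproj blk i T))\<^sup>2)"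
    unfolding normL_sq[OF Lp] sum_distrib_left by (rule sum.cong) simp_all
  have e1: "gf x \<bullet> T + 1/2 * (normL blk B L T)\<^sup>2 = sum al UNIV"
    unfolding al_def e1a e1b by (simp only: sum.distrib)
  have e2: "Psi blk Ps (x + T) = sum P UNIV"
    unfolding Psi_def blkproj_add P_def ..
  have "Hfun f gf blk B L Ps x T = ereal (f x + (gf x \<bullet> T + 1/2 * (normL blk B L T)\<^sup>2)) + Psi blk Ps (x + T)"
    unfolding Hfun_def by (simp only: add.assoc)
  also have "\<dots> = ereal (f x) + (ereal (sum al UNIV) + sum P UNIV)"
    by (simp only: e1 e2 plus_ereal.simps(1)[symmetric] add.assoc)
  also have "\<dots> = ereal (f x) + (\<Sum>i\<in>UNIV. ereal (al i) + P i)"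
    by (simp only: sum_ereal[symmetric] sum.distrib)
  finally show ?thesis unfolding al_def P_def .
qed

theorem lemma5:
  fixes f :: "real^'n \<Rightarrow> real"
    and gf :: "real^'n \<Rightarrow> real^'n"
    and blk :: "'n \<Rightarrow> 'b::finite"
    and B :: "'b \<Rightarrow> real^'n^'n"
    and L :: "'b \<Rightarrow> real"
    and Ps :: "'b \<Rightarrow> real^'n \<Rightarrow> ereal"
    and mu :: real
    and x :: "real^'n"
  assumes B_pd: "\<And>i. blk_posdef blk i (B i)"
    and f_convex: "convex_on UNIV f"
    and f_grad: "\<And>y. (f has_derivative (\<lambda>h. gf y \<bullet> h)) (at y)"
    and L_pos: "\<And>i. L i > 0"
    and f_lip: "\<And>i y t. t \<in> blkspace blk i \<Longrightarrow>
        dualnorm blk B i (blkproj blk i (gf (y + t)) - blkproj blk i (gf y)) \<le> L i * blknorm B i t"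
    and Psi_pcc: "\<And>i. proper_closed_convex_on (blkspace blk i) (Ps i)"
    and has_min: "\<exists>xs. \<forall>y. Fobj f blk Ps xs \<le> Fobj f blk Ps y"
    and mu_pos: "mu > 0"
    and strong: "strongly_convex_wrt (normL blk B L) (Fobj f blk Ps) mu"
    and x_dom: "Fobj f blk Ps x < \<infinity>"
  shows "Hfun f gf blk B L Ps x (Tmap blk B L gf Ps x) - (INF y. Fobj f blk Ps y)
           \<le> ereal (gamma_mu mu) * (Fobj f blk Ps x - (INF y. Fobj f blk Ps y))"
proof -
  let ?F = "Fobj f blk Ps"
  let ?V = "\<lambda>i. blkspace blk i"
  obtain xs where xs: "\<And>y. ?F xs \<le> ?F y" using has_min by blast
  have INF: "(INF y. ?F y) = ?F xs"
  proof (rule antisym)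
    show "(INF y. ?F y) \<le> ?F xs" by (rule INF_lower) simp
    show "?F xs \<le> (INF y. ?F y)" by (rule INF_greatest) (rule xs)
  qed
  have xs_dom: "?F xs < \<infinity>" using xs[of x] x_dom by (rule le_less_trans)
  define p where "p = (\<lambda>i. real_of_ereal (Ps i (blkproj blk i x)))"
  define q where "q = (\<lambda>i. real_of_ereal (Ps i (blkproj blk i xs)))"
  have Px: "\<And>i. Ps i (blkproj blk i x) = ereal (p i)"
    unfolding p_def by (rule F_finite(1)[OF x_dom Psi_pcc])
  have Pxs: "\<And>i. Ps i (blkproj blk i xs) = ereal (q i)"
    unfolding q_def by (rule F_finite(1)[OF xs_dom Psi_pcc])
  define fx where "fx = f x + sum p UNIV"
  define fs where "fs = f xs + sum q UNIV"
  have Fx: "?F x = ereal fx" unfolding fx_def p_def by (rule F_finite(2)[OF x_dom Psi_pcc])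
  have Fxs: "?F xs = ereal fs" unfolding fs_def q_def by (rule F_finite(2)[OF xs_dom Psi_pcc])
  define \<alpha> where "\<alpha> = (if mu \<le> 2 then mu / 2 else 1)"
  have a0: "0 < \<alpha>" and a1: "\<alpha> \<le> 1" unfolding \<alpha>_def using mu_pos by auto
  define T where "T = \<alpha> *\<^sub>R (xs - x)"
  have Tin: "Tblk blk B L gf Ps i x \<in> ?V i" for i
    using Tblk_min[where blk=blk and B=B and L=L and Ps=Ps and i=i and x=x and gf=gf, OF B_pd[of i] L_pos[of i] Psi_pcc[of i]] by blast
  have projT: "\<And>i. blkproj blk i (Tmap blk B L gf Ps x) = Tblk blk B L gf Ps i x"
    unfolding Tmap_def by (rule blkproj_sum[OF Tin])
  have step1: "Hfun f gf blk B L Ps x (Tmap blk B L gf Ps x) \<le> Hfun f gf blk B L Ps x T"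
    unfolding H_decomp[OF L_pos] projT
  proof (rule add_left_mono, rule sum_mono)
    fix i
    show "ereal (blkproj blk i (gf x) \<bullet> Tblk blk B L gf Ps i x +
             L i / 2 * (blknorm B i (Tblk blk B L gf Ps i x))\<^sup>2) +
          Ps i (blkproj blk i x + Tblk blk B L gf Ps i x)
          \<le> ereal (blkproj blk i (gf x) \<bullet> blkproj blk i T + L i / 2 * (blknorm B i (blkproj blk i T))\<^sup>2) +
          Ps i (blkproj blk i x + blkproj blk i T)"
      using Tblk_min[where blk=blk and B=B and L=L and Ps=Ps and i=i and x=x and gf=gf, OF B_pd[of i] L_pos[of i] Psi_pcc[of i]] blkproj_in[of blk i T] by blast
  qed
  have step2: "Hfun f gf blk B L Ps x T \<le> ereal (f (x + T) + 1/2 * (normL blk B L T)\<^sup>2) + Psi blk Ps (x + T)"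
    unfolding Hfun_def
    using convex_tangent[OF f_convex f_grad, of x T] by (intro add_right_mono) simp
  have xT: "x + T = (1 - \<alpha>) *\<^sub>R x + \<alpha> *\<^sub>R xs"
    unfolding T_def by (simp add: algebra_simps)
  have step3: "f (x + T) \<le> (1 - \<alpha>) * f x + \<alpha> * f xs"
    unfolding xT by (rule convex_onD[OF f_convex]) (use a0 a1 in auto)
  have step4: "Psi blk Ps (x + T) \<le> ereal ((1 - \<alpha>) * sum p UNIV + \<alpha> * sum q UNIV)"
  proof -
    have "Ps i (blkproj blk i (x + T)) \<le> ereal ((1 - \<alpha>) * p i + \<alpha> * q i)" for i
    proof -
      have pe: "blkproj blk i (x + T) = \<alpha> *\<^sub>R blkproj blk i xs + (1 - \<alpha>) *\<^sub>R blkproj blk i x"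
        unfolding xT blkproj_add blkproj_scale by (simp add: add.commute)
      show ?thesis
      proof (cases "\<alpha> = 1")
        case True
        then show ?thesis unfolding pe using Pxs[of i] by simp
      next
        case False
        then have a1': "\<alpha> < 1" using a1 by simp
        have "Ps i (\<alpha> *\<^sub>R blkproj blk i xs + (1 - \<alpha>) *\<^sub>R blkproj blk i x)
            \<le> ereal \<alpha> * Ps i (blkproj blk i xs) + ereal (1 - \<alpha>) * Ps i (blkproj blk i x)"
          using Psi_pcc[of i] blkproj_in[of blk i xs] blkproj_in[of blk i x] a0 a1'
          unfolding proper_closed_convex_on_def by blast
        also have "\<dots> = ereal ((1 - \<alpha>) * p i + \<alpha> * q i)" using Px[of i] Pxs[of i] by simp
        finally show ?thesis unfolding pe .
      qed
    qed
    then have "Psi blk Ps (x + T) \<le> (\<Sum>i\<in>UNIV. ereal ((1 - \<alpha>) * p i + \<alpha> * q i))"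
      unfolding Psi_def by (rule sum_mono)
    also have "\<dots> = ereal ((1 - \<alpha>) * sum p UNIV + \<alpha> * sum q UNIV)"
      by (simp add: sum_ereal sum.distrib sum_distrib_left)
    finally show ?thesis .
  qed
  define D where "D = (normL blk B L (x - xs))\<^sup>2"
  have D0: "0 \<le> D" unfolding D_def by simp
  have step5: "(normL blk B L T)\<^sup>2 = \<alpha>\<^sup>2 * D"
  proof -
    have "T = (- \<alpha>) *\<^sub>R (x - xs)" unfolding T_def by (simp add: algebra_simps)
    then show ?thesis unfolding D_def using normL_scale[where c="- \<alpha>" and x="x - xs" and blk=blk and B=B and L=L, OF L_pos B_pd] by simp
  qed
  have step6: "fs + mu / 2 * D \<le> fx"
  proof -
    have sg: "is_subgrad ?F xs 0" unfolding is_subgrad_def using xs by simp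
    have "?F xs + ereal (0 \<bullet> (x - xs)) + ereal (mu / 2 * (normL blk B L (x - xs))\<^sup>2) \<le> ?F x"
      using strong x_dom xs_dom sg unfolding strongly_convex_wrt_def by blast
    then show ?thesis unfolding Fx Fxs D_def by simp
  qed
  define Hb where "Hb = (1 - \<alpha>) * fx + \<alpha> * fs + \<alpha>\<^sup>2 / 2 * D"
  have Hle: "Hfun f gf blk B L Ps x (Tmap blk B L gf Ps x) \<le> ereal Hb"
  proof -
    have "ereal (f (x + T) + 1/2 * (normL blk B L T)\<^sup>2) + Psi blk Ps (x + T)
        \<le> ereal ((1 - \<alpha>) * f x + \<alpha> * f xs + 1/2 * (\<alpha>\<^sup>2 * D)) + ereal ((1 - \<alpha>) * sum p UNIV + \<alpha> * sum q UNIV)"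
      using step3 step4 step5 by (intro add_mono) simp_all
    also have "\<dots> = ereal Hb" unfolding Hb_def fx_def fs_def by (simp add: algebra_simps)
    finally show ?thesis using step1 step2 by (meson order_trans)
  qed
  have real_ineq: "Hb - fs \<le> gamma_mu mu * (fx - fs)"
  proof (cases "mu \<le> 2")
    case True
    have "mu / 4 * (mu / 2 * D) \<le> mu / 4 * (fx - fs)"
      using step6 mu_pos by (intro mult_left_mono) simp_all
    moreover have "\<alpha>\<^sup>2 / 2 * D = mu / 4 * (mu / 2 * D)" unfolding \<alpha>_def using True
      by (simp add: power2_eq_square)
    moreover have aT: "\<alpha> = mu / 2" using True unfolding \<alpha>_def by simp
    moreover have "Hb - fs = (1 - mu / 2) * (fx - fs) + \<alpha>\<^sup>2 / 2 * D"
      unfolding Hb_def aT by (simp add: algebra_simps add_divide_distrib diff_divide_distrib)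
    moreover have "gamma_mu mu * (fx - fs) = (1 - mu / 2) * (fx - fs) + mu / 4 * (fx - fs)"
      unfolding gamma_mu_def using True by (simp add: field_simps)
    ultimately show ?thesis by linarith
  next
    case False
    have "1 / mu * (mu / 2 * D) \<le> 1 / mu * (fx - fs)"
      using step6 mu_pos by (intro mult_left_mono) simp_all
    moreover have "1 / mu * (mu / 2 * D) = D / 2" using mu_pos by simp
    moreover have "Hb - fs = D / 2" unfolding Hb_def \<alpha>_def using False by simp
    moreover have "gamma_mu mu * (fx - fs) = 1 / mu * (fx - fs)"
      unfolding gamma_mu_def using False by simp
    ultimately show ?thesis by linarith
  qed
  have fin: "Hfun f gf blk B L Ps x (Tmap blk B L gf Ps x) - ereal fs \<le> ereal (gamma_mu mu) * (ereal fx - ereal fs)"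
  proof (cases "Hfun f gf blk B L Ps x (Tmap blk B L gf Ps x)")
    case (real h)
    then have "h \<le> Hb" using Hle by simp
    then have "h - fs \<le> gamma_mu mu * (fx - fs)" using real_ineq by linarith
    then show ?thesis using real by simp
  next
    case PInf then show ?thesis using Hle by simp
  next
    case MInf then show ?thesis by simp
  qed
  then show ?thesis unfolding INF Fx Fxs .
qed

end
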